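(* Let $R$ be a commutative elementary divisor domain and let $E=\mathrm{diag}(\varepsilon_1,\dots,\varepsilon_n)$, $\Phi=\mathrm{diag}(\varphi_1,\dots,\varphi_n)$ be nonsingular $d$-matrices with $\varphi_i\mid\varepsilon_i$ for all $i$. Then every class $\mathbf G_\Phi L=\{HL:H\in\mathbf G_\Phi\}$, $L\in\mathbf L(E,\Phi)$, contains exactly one element of $\mathbf V(E,\Phi)$ if and only if the following holds: for every index $i\in\{2,\dots,n\}$ such that $\varphi_i$ and $\varphi_{i-1}$ are not associates, every non-unit divisor $\delta$ of $\varphi_i/\varphi_{i-1}$ satisfies $\big(\delta,\ \frac{\varphi_i}{(\varphi_i,\varepsilon_{i-1})}\big)\ne1$.
   Context: Elementary divisor domain: commutative integral domain over which every matrix is equivalent to a $d$-matrix (diagonal $\mathrm{diag}(\varphi_1,\dots)$ with $\varphi_i\mid\varphi_{i+1}$). $\mathbf G_\Phi=\{H\in GL_n(R):\exists K\in GL_n(R),\ H\Phi=\Phi K\}$; $\mathbf L(E,\Phi)=\{L\in GL_n(R):\exists S\in M_n(R),\ LE=\Phi S\}$. For $f\in R$, $K(f)$ is a fixed complete system of representatives of the residue classes of $R$ modulo $fR$. The Kazimirskii set $\mathbf V(E,\Phi)$ is the set of lower unitriangular $n\times n$ matrices whose entry in position $(i,j)$, $i>j$, equals $\frac{\varphi_i}{(\varphi_i,\varepsilon_j)}k_{ij}$ with $k_{ij}\in K\big(\frac{(\varphi_i,\varepsilon_j)}{\varphi_j}\big)$. *)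

theory Defs
  imports "Jordan_Normal_Form.Determinant"
begin

text \<open>Indices are 0-based: the paper's index i in 1..n corresponds to i-1 here.\<close>

definition GL :: "nat \<Rightarrow> 'a::comm_ring_1 mat set" where
  "GL n = {A \<in> carrier_mat n n. invertible_mat A}"

definition mat_equiv :: "'a::comm_ring_1 mat \<Rightarrow> 'a mat \<Rightarrow> bool" where
  "mat_equiv A B \<longleftrightarrow> (\<exists>P Q. P \<in> GL (dim_row A) \<and> Q \<in> GL (dim_col A) \<and> B = P * A * Q)"

definition d_matrix :: "'a::comm_ring_1 mat \<Rightarrow> bool" where
  "d_matrix D \<longleftrightarrow>
     (\<forall>i < dim_row D. \<forall>j < dim_col D. i \<noteq> j \<longrightarrow> D $$ (i,j) = 0) \<and>
     (\<forall>i. Suc i < dim_row D \<and> Suc i < dim_col D \<longrightarrow> D $$ (i,i) dvd D $$ (Suc i, Suc i))"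

definition elementary_divisor_domain :: "'a::idom itself \<Rightarrow> bool" where
  "elementary_divisor_domain TYPE('a) \<longleftrightarrow>
     (\<forall>m k. \<forall>A::'a mat. A \<in> carrier_mat m k \<longrightarrow> (\<exists>D. d_matrix D \<and> mat_equiv A D))"

definition is_gcd_fun :: "('a::comm_ring_1 \<Rightarrow> 'a \<Rightarrow> 'a) \<Rightarrow> bool" where
  "is_gcd_fun g \<longleftrightarrow> (\<forall>a b. g a b dvd a \<and> g a b dvd b \<and> (\<forall>d. d dvd a \<and> d dvd b \<longrightarrow> d dvd g a b))"

definition is_residue_system :: "('a::comm_ring_1 \<Rightarrow> 'a set) \<Rightarrow> bool" where
  "is_residue_system K \<longleftrightarrow> (\<forall>f a. \<exists>!k. k \<in> K f \<and> f dvd (a - k))"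

definition G_Phi :: "'a::comm_ring_1 mat \<Rightarrow> 'a mat set" where
  "G_Phi Phi = {H \<in> GL (dim_row Phi). \<exists>K \<in> GL (dim_row Phi). H * Phi = Phi * K}"

definition L_set :: "'a::comm_ring_1 mat \<Rightarrow> 'a mat \<Rightarrow> 'a mat set" where
  "L_set E Phi = {L \<in> GL (dim_row Phi). \<exists>S \<in> carrier_mat (dim_row Phi) (dim_row Phi). L * E = Phi * S}"

definition V_set :: "('a::idom_divide \<Rightarrow> 'a \<Rightarrow> 'a) \<Rightarrow> ('a \<Rightarrow> 'a set) \<Rightarrow> 'a mat \<Rightarrow> 'a mat \<Rightarrow> 'a mat set" where
  "V_set g K E Phi = {V \<in> carrier_mat (dim_row Phi) (dim_row Phi).
      (\<forall>i < dim_row Phi. V $$ (i,i) = 1) \<and>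
      (\<forall>i j. i < j \<and> j < dim_row Phi \<longrightarrow> V $$ (i,j) = 0) \<and>
      (\<forall>i j. j < i \<and> i < dim_row Phi \<longrightarrow>
         (\<exists>k \<in> K (g (Phi $$ (i,i)) (E $$ (j,j)) div Phi $$ (j,j)).
            V $$ (i,j) = (Phi $$ (i,i) div g (Phi $$ (i,i)) (E $$ (j,j))) * k))}"

end

theory Submission
  imports Defs
begin


lemma det_unit_invertible:
  fixes A :: "'a::comm_ring_1 mat"
  assumes A: "A \<in> carrier_mat n n" and u: "det A dvd 1"
  shows "invertible_mat A"
proof -
  obtain w where w: "1 = det A * w" using u by (auto elim!: dvdE)
  define B where "B = w \<cdot>\<^sub>m adj_mat A"
  have B: "B \<in> carrier_mat n n" using adj_mat(1)[OF A] unfolding B_def by simp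
  have "A * B = w \<cdot>\<^sub>m (A * adj_mat A)" unfolding B_def using A adj_mat(1)[OF A]
    by (simp add: mult_smult_distrib)
  also have "\<dots> = 1\<^sub>m n" unfolding adj_mat(2)[OF A]
    by (rule eq_matI) (auto simp: w[symmetric] mult.commute[of w])
  finally have 1: "A * B = 1\<^sub>m n" .
  have "B * A = w \<cdot>\<^sub>m (adj_mat A * A)" unfolding B_def using A adj_mat(1)[OF A]
    by (simp add: mult_smult_assoc_mat)
  also have "\<dots> = 1\<^sub>m n" unfolding adj_mat(3)[OF A]
    by (rule eq_matI) (auto simp: w[symmetric] mult.commute[of w])
  finally have 2: "B * A = 1\<^sub>m n" .
  show ?thesis unfolding invertible_mat_def inverts_mat_def using A B 1 2 by auto
qed

lemma invertible_det_unit: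
  fixes A :: "'a::comm_ring_1 mat"
  assumes A: "A \<in> carrier_mat n n" and i: "invertible_mat A"
  shows "det A dvd 1"
proof -
  from i obtain B where AB: "A * B = 1\<^sub>m (dim_row A)" "B * A = 1\<^sub>m (dim_row B)"
    unfolding invertible_mat_def inverts_mat_def by auto
  have B: "B \<in> carrier_mat n n" using AB A
  proof -
    have "dim_col B = n" using arg_cong[OF AB(1), of dim_col] A by simp
    moreover have "dim_row B = n" using arg_cong[OF AB(2), of dim_col] A by simp
    ultimately show ?thesis by auto
  qed
  have "det A * det B = 1" using det_mult[OF A B] AB A by simp
  thus ?thesis by (metis dvdI)
qed




lemma mult_entry:
  assumes "A \<in> carrier_mat nr m" "B \<in> carrier_mat m nc" "i < nr" "j < nc"
  shows "(A * B) $$ (i,j) = (\<Sum>k = 0..<m. A $$ (i,k) * B $$ (k,j))"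
  using assms by (auto simp: scalar_prod_def intro!: sum.cong)

lemma inv_ex:
  fixes A :: "'a::comm_ring_1 mat"
  assumes A: "A \<in> carrier_mat n n" and i: "invertible_mat A"
  shows "\<exists>B \<in> carrier_mat n n. A * B = 1\<^sub>m n \<and> B * A = 1\<^sub>m n"
proof -
  from i obtain B where AB: "A * B = 1\<^sub>m (dim_row A)" "B * A = 1\<^sub>m (dim_row B)"
    unfolding invertible_mat_def inverts_mat_def by auto
  have "dim_col B = n" using arg_cong[OF AB(1), of dim_col] A by simp
  moreover have "dim_row B = n" using arg_cong[OF AB(2), of dim_col] A by simp
  ultimately show ?thesis using AB A by auto
qed

lemma edd_bezout:
  fixes x y :: "'a::idom_divide"
  assumes edd: "elementary_divisor_domain TYPE('a)"
  shows "\<exists>d u v. d = u * x + v * y \<and> d dvd x \<and> d dvd y"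
proof -
  define A :: "'a mat" where "A = mat 1 2 (\<lambda>(i,j). if j = 0 then x else y)"
  have A: "A \<in> carrier_mat 1 2" unfolding A_def by simp
  obtain D where D: "d_matrix D" "mat_equiv A D"
    using edd A unfolding elementary_divisor_domain_def by blast
  obtain P Q where PQ: "P \<in> GL 1" "Q \<in> GL 2" "D = P * A * Q"
    using D(2) A unfolding mat_equiv_def by auto
  have P: "P \<in> carrier_mat 1 1" "invertible_mat P" and Q: "Q \<in> carrier_mat 2 2" "invertible_mat Q"
    using PQ unfolding GL_def by auto
  obtain P' where P': "P' \<in> carrier_mat 1 1" "P' * P = 1\<^sub>m 1" using inv_ex[OF P] by auto
  obtain Q' where Q': "Q' \<in> carrier_mat 2 2" "Q * Q' = 1\<^sub>m 2" using inv_ex[OF Q] by auto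
  have Dc: "D \<in> carrier_mat 1 2" using PQ(3) P Q A by auto
  have D01: "D $$ (0,1) = 0" using D(1) Dc unfolding d_matrix_def by auto
  have "D $$ (0,0) = (\<Sum>k = 0..<2. (P * A) $$ (0,k) * Q $$ (k,0))"
    unfolding PQ(3) by (rule mult_entry[of _ 1 2 _ 2]) (use P Q A in auto)
  also have "\<dots> = (P $$ (0,0) * x) * Q $$ (0,0) + (P $$ (0,0) * y) * Q $$ (1,0)"
    using P A by (simp add: scalar_prod_def numeral_2_eq_2 A_def)
  finally have d: "D $$ (0,0) = (P $$ (0,0) * Q $$ (0,0)) * x + (P $$ (0,0) * Q $$ (1,0)) * y"
    by (simp add: algebra_simps)
  have PA: "P * A \<in> carrier_mat 1 2" using P A by auto
  have "P' * D = P' * (P * A) * Q" unfolding PQ(3)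
    using assoc_mult_mat[OF P'(1) PA Q(1)] by simp
  also have "P' * (P * A) = (P' * P) * A" using assoc_mult_mat[OF P'(1) P(1) A] by simp
  also have "\<dots> = A" using P'(2) A by simp
  finally have "P' * D = A * Q" .
  hence "P' * D * Q' = A * Q * Q'" by simp
  also have "\<dots> = A * (Q * Q')" using assoc_mult_mat[OF A Q(1) Q'(1)] .
  also have "\<dots> = A" using Q'(2) A by simp
  finally have AD: "A = P' * D * Q'" by simp
  have ent: "A $$ (0,j) = P' $$ (0,0) * D $$ (0,0) * Q' $$ (0,j)" if j: "j < 2" for j
  proof -
    have "A $$ (0,j) = (\<Sum>k = 0..<2. (P' * D) $$ (0,k) * Q' $$ (k,j))"
      unfolding AD by (rule mult_entry[of _ 1 2 _ 2]) (use P' Dc Q' j in auto)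
    also have "\<dots> = P' $$ (0,0) * D $$ (0,0) * Q' $$ (0,j)"
      using P' Dc D01 by (simp add: scalar_prod_def numeral_2_eq_2)
    finally show ?thesis .
  qed
  have "x = A $$ (0,0)" "y = A $$ (0,1)" unfolding A_def by auto
  hence "D $$ (0,0) dvd x" "D $$ (0,0) dvd y" using ent[of 0] ent[of 1] by auto
  thus ?thesis using d by blast
qed

lemma edd_bezout_gcd:
  fixes x y :: "'a::idom_divide"
  assumes edd: "elementary_divisor_domain TYPE('a)" and g: "is_gcd_fun g"
  shows "\<exists>u v. g x y = u * x + v * y"
proof -
  obtain d u v where d: "d = u * x + v * y" "d dvd x" "d dvd y" using edd_bezout[OF edd] by blast
  have "g x y dvd x" "g x y dvd y" using g unfolding is_gcd_fun_def by auto
  hence "g x y dvd d" unfolding d(1) by auto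
  then obtain w where "d = g x y * w" by auto
  have "d dvd g x y" using g d unfolding is_gcd_fun_def by auto
  then obtain z where z: "g x y = d * z" by auto
  show ?thesis using z d(1) by (intro exI[of _ "z * u"] exI[of _ "z * v"]) (simp add: algebra_simps)
qed

lemma edd_coprime:
  fixes x y :: "'a::idom_divide"
  assumes edd: "elementary_divisor_domain TYPE('a)" and g: "is_gcd_fun g" and u: "g x y dvd 1"
  shows "\<exists>u v. u * x + v * y = 1"
proof -
  obtain u v where uv: "g x y = u * x + v * y" using edd_bezout_gcd[OF edd g] by blast
  obtain w where w: "1 = g x y * w" using u by auto
  show ?thesis using uv w by (intro exI[of _ "w * u"] exI[of _ "w * v"]) (simp add: algebra_simps)
qed

lemma edd_euclid:
  fixes phi x e :: "'a::idom_divide"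
  assumes edd: "elementary_divisor_domain TYPE('a)" and g: "is_gcd_fun g"
    and nz: "phi \<noteq> 0" and dv: "phi dvd x * e"
  shows "(phi div g phi e) dvd x"
proof -
  obtain h where hdef: "h = g phi e" by blast
  have h1: "h dvd phi" "h dvd e" using g unfolding is_gcd_fun_def hdef by auto
  have hnz: "h \<noteq> 0" using h1(1) nz by auto
  obtain \<alpha> where pa: "phi = h * \<alpha>" using h1(1) by auto
  obtain \<beta> where \<beta>: "e = h * \<beta>" using h1(2) by auto
  have "phi div h = \<alpha>" using pa hnz by simp
  hence ad: "phi div g phi e = \<alpha>" using hdef by simp
  obtain u v where uv: "g phi e = u * phi + v * e" using edd_bezout_gcd[OF edd g] by blast
  have uv': "h = u * phi + v * e" using uv hdef by simp
  have "h * 1 = h * (u * \<alpha> + v * \<beta>)" using uv' unfolding pa \<beta>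
    by (simp add: algebra_simps)
  hence one: "u * \<alpha> + v * \<beta> = 1" using hnz by (metis mult_left_cancel)
  from dv obtain c where c: "x * e = phi * c" by auto
  have "h * (x * \<beta>) = h * (\<alpha> * c)" using c unfolding pa \<beta> by (simp add: algebra_simps)
  hence xb: "x * \<beta> = \<alpha> * c" using hnz by (metis mult_left_cancel)
  have "x = x * (u * \<alpha> + v * \<beta>)" using one by simp
  also have "\<dots> = \<alpha> * (x * u + v * c)" using xb by (simp add: algebra_simps)
  finally show ?thesis unfolding ad by (metis dvdI)
qed




lemma sum_single:
  assumes "finite S" "k \<in> S" "\<And>j. j \<in> S \<Longrightarrow> j \<noteq> k \<Longrightarrow> f j = 0"
  shows "sum f S = f k"
proof -
  have "sum f S = f k + sum f (S - {k})" using assms by (simp add: sum.remove)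
  also have "sum f (S - {k}) = 0" using assms by (intro sum.neutral) auto
  finally show ?thesis by simp
qed

locale kz =
  fixes E Phi :: "'a::idom_divide mat" and n :: nat
    and g :: "'a \<Rightarrow> 'a \<Rightarrow> 'a" and K :: "'a \<Rightarrow> 'a set"
  assumes edd: "elementary_divisor_domain TYPE('a)"
    and gcd: "is_gcd_fun g"
    and res: "is_residue_system K"
    and Ec: "E \<in> carrier_mat n n" and Ed: "d_matrix E" and Edet: "det E \<noteq> 0"
    and Pc: "Phi \<in> carrier_mat n n" and Pd: "d_matrix Phi" and Pdet: "det Phi \<noteq> 0"
    and dv: "\<forall>i < n. Phi $$ (i,i) dvd E $$ (i,i)"
begin

abbreviation phi where "phi l \<equiv> Phi $$ (l,l)"
abbreviation eps where "eps l \<equiv> E $$ (l,l)"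

lemma P_off: "i < n \<Longrightarrow> j < n \<Longrightarrow> i \<noteq> j \<Longrightarrow> Phi $$ (i,j) = 0"
  using Pd Pc unfolding d_matrix_def by auto
lemma E_off: "i < n \<Longrightarrow> j < n \<Longrightarrow> i \<noteq> j \<Longrightarrow> E $$ (i,j) = 0"
  using Ed Ec unfolding d_matrix_def by auto

lemma phi_nz: assumes l: "l < n" shows "phi l \<noteq> 0"
proof
  assume z: "phi l = 0"
  have ut: "upper_triangular Phi" unfolding upper_triangular_def using P_off Pc by auto
  have "det Phi = prod_list (diag_mat Phi)" by (rule det_upper_triangular[OF ut Pc])
  also have "\<dots> = 0" using z l Pc by (auto simp: prod_list_zero_iff diag_mat_def)
  finally show False using Pdet by simp
qed

lemma phi_step: "Suc i < n \<Longrightarrow> phi i dvd phi (Suc i)"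
  using Pd Pc unfolding d_matrix_def by auto
lemma eps_step: "Suc i < n \<Longrightarrow> eps i dvd eps (Suc i)"
  using Ed Ec unfolding d_matrix_def by auto

lemma phi_chain: assumes "l \<le> m" "m < n" shows "phi l dvd phi m"
  using assms
proof (induction m rule: dec_induct)
  case (step k)
  hence "phi l dvd phi k" "phi k dvd phi (Suc k)" using phi_step[of k] by auto
  thus ?case by (rule dvd_trans)
qed simp

lemma eps_chain: assumes "l \<le> m" "m < n" shows "eps l dvd eps m"
  using assms
proof (induction m rule: dec_induct)
  case (step k)
  hence "eps l dvd eps k" "eps k dvd eps (Suc k)" using eps_step[of k] by auto
  thus ?case by (rule dvd_trans)
qed simp

lemma phi_eps: "l < n \<Longrightarrow> phi l dvd eps l" using dv by auto

lemma mult_Phi_right: assumes "A \<in> carrier_mat n n" "i < n" "j < n"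
  shows "(A * Phi) $$ (i,j) = A $$ (i,j) * phi j"
proof -
  have "(A * Phi) $$ (i,j) = (\<Sum>k = 0..<n. A $$ (i,k) * Phi $$ (k,j))"
    by (rule mult_entry) (use assms Pc in auto)
  also have "\<dots> = A $$ (i,j) * phi j"
    by (rule sum_single) (use assms P_off in auto)
  finally show ?thesis .
qed

lemma mult_Phi_left: assumes "A \<in> carrier_mat n n" "i < n" "j < n"
  shows "(Phi * A) $$ (i,j) = phi i * A $$ (i,j)"
proof -
  have "(Phi * A) $$ (i,j) = (\<Sum>k = 0..<n. Phi $$ (i,k) * A $$ (k,j))"
    by (rule mult_entry) (use assms Pc in auto)
  also have "\<dots> = phi i * A $$ (i,j)"
    by (rule sum_single) (use assms P_off in auto)
  finally show ?thesis .
qed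

lemma mult_E_right: assumes "A \<in> carrier_mat n n" "i < n" "j < n"
  shows "(A * E) $$ (i,j) = A $$ (i,j) * eps j"
proof -
  have "(A * E) $$ (i,j) = (\<Sum>k = 0..<n. A $$ (i,k) * E $$ (k,j))"
    by (rule mult_entry) (use assms Ec in auto)
  also have "\<dots> = A $$ (i,j) * eps j"
    by (rule sum_single) (use assms E_off in auto)
  finally show ?thesis .
qed

definition q where "q i l = phi i div phi l"
definition a where "a i j = phi i div g (phi i) (eps j)"
definition b where "b i j = g (phi i) (eps j) div phi j"

lemma q_mult: "l \<le> i \<Longrightarrow> i < n \<Longrightarrow> phi l * q i l = phi i"
  unfolding q_def using phi_chain by simp

lemma q_trans: assumes "m \<le> l" "l \<le> i" "i < n" shows "q i l * q l m = q i m"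
proof -
  have "phi m * (q i l * q l m) = (phi m * q l m) * q i l" by (simp add: ac_simps)
  also have "\<dots> = phi l * q i l" using q_mult[of m l] assms by simp
  also have "\<dots> = phi i" using q_mult[of l i] assms by simp
  also have "\<dots> = phi m * q i m" using q_mult[of m i] assms by simp
  finally have "phi m * (q i l * q l m) = phi m * q i m" .
  thus ?thesis using phi_nz[of m] assms by auto
qed

lemma q_refl: "i < n \<Longrightarrow> q i i = 1" unfolding q_def using phi_nz by simp

lemma q_dvd: assumes "m \<le> l" "l \<le> i" "i < n" shows "q i l dvd q i m"
  using q_trans[OF assms] by (metis dvd_triv_left)

lemma q_nz: "l \<le> i \<Longrightarrow> i < n \<Longrightarrow> q i l \<noteq> 0"
  using q_mult[of l i] phi_nz[of i] by auto

lemma g_dvd: "g x y dvd x" "g x y dvd y" "d dvd x \<Longrightarrow> d dvd y \<Longrightarrow> d dvd g x y"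
  using gcd unfolding is_gcd_fun_def by auto

lemma ab: assumes "j \<le> i" "i < n" shows "a i j * b i j = q i j"
proof -
  let ?h = "g (phi i) (eps j)"
  have "phi j dvd ?h" using g_dvd(3)[OF phi_chain[OF assms] phi_eps] assms by auto
  hence h2: "?h = phi j * b i j" unfolding b_def by simp
  have h1: "phi i = ?h * a i j" unfolding a_def using g_dvd(1)[of "phi i"] by simp
  have "phi j * (a i j * b i j) = (phi j * b i j) * a i j" by (simp add: ac_simps)
  also have "\<dots> = phi i" using h1 h2 by simp
  also have "\<dots> = phi j * q i j" using q_mult[OF assms] by simp
  finally have "phi j * (a i j * b i j) = phi j * q i j" .
  thus ?thesis using phi_nz[of j] assms by auto
qed

lemma a_nz: assumes "j \<le> i" "i < n" shows "a i j \<noteq> 0"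
proof
  assume "a i j = 0"
  hence "q i j = 0" using ab[OF assms] by simp
  thus False using q_nz[OF assms] by simp
qed

lemma G_dvd:
  assumes H: "H \<in> carrier_mat n n" and X: "X \<in> carrier_mat n n" and HX: "H * Phi = Phi * X"
    and ij: "j \<le> i" "i < n"
  shows "q i j dvd H $$ (i,j)"
proof -
  have "H $$ (i,j) * phi j = phi i * X $$ (i,j)"
    using mult_Phi_right[OF H, of i j] mult_Phi_left[OF X, of i j] HX ij by simp
  hence "phi j * H $$ (i,j) = phi j * (q i j * X $$ (i,j))"
    using q_mult[OF ij] by (simp add: ac_simps)
  hence "H $$ (i,j) = q i j * X $$ (i,j)" using phi_nz[of j] ij by auto
  thus ?thesis by simp
qed

lemma G_elim:
  assumes "H \<in> G_Phi Phi"
  shows "H \<in> carrier_mat n n" "invertible_mat H" "\<exists>X \<in> carrier_mat n n. H * Phi = Phi * X"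
  using assms Pc unfolding G_Phi_def GL_def by auto

lemma G_dvd': assumes "H \<in> G_Phi Phi" "j \<le> i" "i < n" shows "q i j dvd H $$ (i,j)"
proof -
  obtain X where X: "X \<in> carrier_mat n n" "H * Phi = Phi * X" using G_elim(3)[OF assms(1)] by blast
  show ?thesis by (rule G_dvd[OF G_elim(1)[OF assms(1)] X assms(2,3)])
qed

lemma G_intro:
  assumes H: "H \<in> carrier_mat n n" and u: "det H dvd 1"
    and d: "\<And>i j. j < i \<Longrightarrow> i < n \<Longrightarrow> q i j dvd H $$ (i,j)"
  shows "H \<in> G_Phi Phi"
proof -
  define X where "X = mat n n (\<lambda>(i,j). H $$ (i,j) * phi j div phi i)"
  have X: "X \<in> carrier_mat n n" unfolding X_def by simp
  have dd: "phi i dvd H $$ (i,j) * phi j" if ij: "i < n" "j < n" for i j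
  proof (cases "j < i")
    case True
    obtain c where "H $$ (i,j) = q i j * c" using d[of j i] True ij by (auto elim!: dvdE)
    hence "H $$ (i,j) * phi j = phi i * c" using q_mult[of j i] True ij
      by (simp add: algebra_simps)
    thus ?thesis by simp
  next
    case False
    thus ?thesis using phi_chain[of i j] ij by simp
  qed
  have HX: "H * Phi = Phi * X"
  proof (rule eq_matI)
    fix i j assume ij: "i < dim_row (Phi * X)" "j < dim_col (Phi * X)"
    hence ij': "i < n" "j < n" using X Pc by auto
    show "(H * Phi) $$ (i,j) = (Phi * X) $$ (i,j)"
      unfolding mult_Phi_right[OF H ij'] mult_Phi_left[OF X ij'] using ij' dd[OF ij']
      unfolding X_def by simp
  qed (use H X Pc in auto)
  have "det Phi * det X = det H * det Phi"
    using det_mult[OF Pc X] det_mult[OF H Pc] HX by simp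
  hence "det Phi * det X = det Phi * det H" by (simp add: ac_simps)
  hence "det X = det H" using Pdet by simp
  hence Xi: "invertible_mat X" using det_unit_invertible[OF X] u by simp
  have Hi: "invertible_mat H" using det_unit_invertible[OF H u] .
  show ?thesis unfolding G_Phi_def GL_def using H Hi X Xi HX Pc by auto
qed

lemma L_elim:
  assumes "L \<in> L_set E Phi"
  shows "L \<in> carrier_mat n n" "invertible_mat L" "\<And>l j. l < n \<Longrightarrow> j < n \<Longrightarrow> phi l dvd L $$ (l,j) * eps j"
proof -
  show L: "L \<in> carrier_mat n n" "invertible_mat L" using assms Pc unfolding L_set_def GL_def by auto
  obtain S where S: "S \<in> carrier_mat n n" "L * E = Phi * S" using assms Pc unfolding L_set_def by auto
  fix l j assume "l < n" "j < n"
  thus "phi l dvd L $$ (l,j) * eps j"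
  proof -
    have "L $$ (l,j) * eps j = phi l * S $$ (l,j)"
      using mult_E_right[OF L(1), of l j] mult_Phi_left[OF S(1), of l j] S(2) \<open>l < n\<close> \<open>j < n\<close> by simp
    thus ?thesis by (metis dvdI)
  qed
qed

lemma L_intro:
  assumes L: "L \<in> carrier_mat n n" "invertible_mat L"
    and d: "\<And>l j. l < n \<Longrightarrow> j < n \<Longrightarrow> phi l dvd L $$ (l,j) * eps j"
  shows "L \<in> L_set E Phi"
proof -
  define S where "S = mat n n (\<lambda>(i,j). L $$ (i,j) * eps j div phi i)"
  have S: "S \<in> carrier_mat n n" unfolding S_def by simp
  have "L * E = Phi * S"
  proof (rule eq_matI)
    fix i j assume ij: "i < dim_row (Phi * S)" "j < dim_col (Phi * S)"
    hence ij': "i < n" "j < n" using S Pc by auto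
    show "(L * E) $$ (i,j) = (Phi * S) $$ (i,j)"
      unfolding mult_E_right[OF L(1) ij'] mult_Phi_left[OF S ij'] using ij' d[OF ij']
      unfolding S_def by simp
  qed (use L S Pc Ec in auto)
  thus ?thesis unfolding L_set_def GL_def using L S Pc by auto
qed

lemma V_iff: "V \<in> V_set g K E Phi \<longleftrightarrow> V \<in> carrier_mat n n \<and> (\<forall>i<n. V $$ (i,i) = 1) \<and>
   (\<forall>i j. i < j \<and> j < n \<longrightarrow> V $$ (i,j) = 0) \<and>
   (\<forall>i j. j < i \<and> i < n \<longrightarrow> (\<exists>k \<in> K (b i j). V $$ (i,j) = a i j * k))"
  unfolding V_set_def a_def b_def using Pc by auto

end



lemma sum_two:
  assumes "finite S" "x \<in> S" "y \<in> S" "x \<noteq> y" "\<And>k. k \<in> S \<Longrightarrow> k \<noteq> x \<Longrightarrow> k \<noteq> y \<Longrightarrow> f k = 0"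
  shows "sum f S = f x + f y"
proof -
  have "sum f S = f x + sum f (S - {x})" using assms by (simp add: sum.remove)
  also have "sum f (S - {x}) = f y + sum f (S - {x} - {y})" by (rule sum.remove) (use assms in auto)
  also have "sum f (S - {x} - {y}) = 0" using assms by (intro sum.neutral) auto
  finally show ?thesis by simp
qed

context kz begin

lemma band_unique:
  assumes G: "G \<in> carrier_mat n n" and Gd: "\<And>i j. j < i \<Longrightarrow> i < n \<Longrightarrow> q i j dvd G $$ (i,j)"
    and V: "V \<in> V_set g K E Phi" and V': "V' \<in> V_set g K E Phi" and GV: "G * V = V'"
  shows "V = V'"
proof -
  note VI = V[unfolded V_iff] and VI' = V'[unfolded V_iff]
  have Vc: "V \<in> carrier_mat n n" and Vc': "V' \<in> carrier_mat n n" using VI VI' by auto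
  have claim: "\<forall>c. n - d \<le> c \<and> c < n \<longrightarrow> (\<forall>r<n. V $$ (r,c) = V' $$ (r,c) \<and> G $$ (r,c) = (if r = c then 1 else 0))"
    if "d \<le> n" for d
    using that
  proof (induction d)
    case 0 thus ?case by auto
  next
    case (Suc d)
    define j where "j = n - Suc d"
    have jn: "j < n" "n - d = Suc j" using Suc.prems unfolding j_def by auto
    have IH: "\<And>c r. j < c \<Longrightarrow> c < n \<Longrightarrow> r < n \<Longrightarrow> V $$ (r,c) = V' $$ (r,c) \<and> G $$ (r,c) = (if r = c then 1 else 0)"
      using Suc.IH Suc.prems jn by auto
    have col: "V' $$ (r,j) = G $$ (r,j) + (if j < r then V $$ (r,j) else 0)" if r: "r < n" for r
    proof -
      have "V' $$ (r,j) = (\<Sum>k = 0..<n. G $$ (r,k) * V $$ (k,j))"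
        unfolding GV[symmetric] by (rule mult_entry[OF G Vc r jn(1)])
      also have "\<dots> = (\<Sum>k = 0..<n. (if k = j then G $$ (r,j) else 0) + (if k = r then (if j < r then V $$ (r,j) else 0) else 0))"
      proof (rule sum.cong[OF refl])
        fix k assume k: "k \<in> {0..<n}"
        show "G $$ (r,k) * V $$ (k,j) = (if k = j then G $$ (r,j) else 0) + (if k = r then (if j < r then V $$ (r,j) else 0) else 0)"
        proof (cases "k < j")
          case True thus ?thesis using VI k jn by auto
        next
          case False
          show ?thesis
          proof (cases "k = j")
            case True thus ?thesis using VI jn by auto
          next
            case False
            hence "j < k" using \<open>\<not> k < j\<close> by auto
            thus ?thesis using IH[of k r] k r False by auto
          qed
        qed
      qed
      also have "\<dots> = G $$ (r,j) + (if j < r then V $$ (r,j) else 0)"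
        using r jn by (simp add: sum.distrib)
      finally show ?thesis .
    qed
    have newcol: "V $$ (r,j) = V' $$ (r,j) \<and> G $$ (r,j) = (if r = j then 1 else 0)" if r: "r < n" for r
    proof (cases "r < j")
      case True
      thus ?thesis using col[OF r] VI VI' jn by auto
    next
      case False
      show ?thesis
      proof (cases "r = j")
        case True thus ?thesis using col[OF r] VI VI' jn by auto
      next
        case False
        hence jr: "j < r" using \<open>\<not> r < j\<close> by auto
        obtain k where k: "k \<in> K (b r j)" "V $$ (r,j) = a r j * k" using VI jr r by blast
        obtain k' where k': "k' \<in> K (b r j)" "V' $$ (r,j) = a r j * k'" using VI' jr r by blast
        obtain c where c: "G $$ (r,j) = q r j * c" using Gd[OF jr r] by (auto elim!: dvdE)
        have "a r j * k' = q r j * c + a r j * k" using col[OF r] jr k k' c by simp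
        hence "a r j * (k' - k) = a r j * (b r j * c)" using ab[of j r] jr r
          by (simp add: algebra_simps)
        hence kk: "k' - k = b r j * c" using a_nz[of j r] jr r by simp
        have "\<exists>!x. x \<in> K (b r j) \<and> b r j dvd (k - x)" using res unfolding is_residue_system_def by blast
        moreover have "b r j dvd (k - k)" by simp
        moreover have "b r j dvd (k - k')" using kk by (metis dvd_minus_iff dvdI minus_diff_eq)
        ultimately have "k = k'" using k k' by blast
        hence "V $$ (r,j) = V' $$ (r,j)" using k k' by simp
        moreover have "G $$ (r,j) = 0" using col[OF r] jr \<open>V $$ (r,j) = V' $$ (r,j)\<close> by simp
        ultimately show ?thesis using jr by simp
      qed
    qed
    show ?case
    proof (rule allI, rule impI)
      fix c assume c: "n - Suc d \<le> c \<and> c < n"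
      show "\<forall>r<n. V $$ (r,c) = V' $$ (r,c) \<and> G $$ (r,c) = (if r = c then 1 else 0)"
      proof (cases "c = j")
        case True thus ?thesis using newcol by auto
      next
        case False
        hence "j < c" using c unfolding j_def by auto
        thus ?thesis using IH c by auto
      qed
    qed
  qed
  have all: "\<forall>r<n. V $$ (r,c) = V' $$ (r,c)" if "c < n" for c
    using claim[of n] that by auto
  show ?thesis by (rule eq_matI) (use all Vc Vc' in auto)
qed

lemma class_unique:
  assumes L: "L \<in> carrier_mat n n" and H: "H \<in> G_Phi Phi" and H': "H' \<in> G_Phi Phi"
    and V: "V \<in> V_set g K E Phi" and V': "V' \<in> V_set g K E Phi"
    and VH: "V = H * L" and VH': "V' = H' * L"
  shows "V = V'"
proof -
  have Hc: "H \<in> carrier_mat n n" "invertible_mat H" and Hc': "H' \<in> carrier_mat n n"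
    using G_elim H H' by auto
  obtain X where X: "X \<in> carrier_mat n n" "invertible_mat X" "H * Phi = Phi * X"
    using H Pc unfolding G_Phi_def GL_def by auto
  obtain X' where X': "X' \<in> carrier_mat n n" "H' * Phi = Phi * X'"
    using H' Pc unfolding G_Phi_def GL_def by auto
  obtain Hi where Hi: "Hi \<in> carrier_mat n n" "H * Hi = 1\<^sub>m n" "Hi * H = 1\<^sub>m n" using inv_ex[OF Hc] by auto
  obtain Xi where Xi: "Xi \<in> carrier_mat n n" "X * Xi = 1\<^sub>m n" "Xi * X = 1\<^sub>m n" using inv_ex[OF X(1,2)] by auto
  have "Hi * Phi = Hi * Phi * (X * Xi)" using Hi Pc by (simp add: Xi(2))
  also have "\<dots> = Hi * (Phi * X) * Xi"
    using Hi Pc X Xi by (simp add: assoc_mult_mat[of _ n n _ n _ n])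
  also have "\<dots> = Hi * H * Phi * Xi" unfolding X(3)[symmetric]
    using Hi Pc Hc assoc_mult_mat[OF Hi(1) Hc(1) Pc] by simp
  also have "\<dots> = Phi * Xi" using Hi Pc by simp
  finally have HiP: "Hi * Phi = Phi * Xi" .
  define G where "G = H' * Hi"
  have Gc: "G \<in> carrier_mat n n" unfolding G_def using Hc' Hi by auto
  have "G * Phi = H' * (Hi * Phi)" unfolding G_def using Hc' Hi Pc by (simp add: assoc_mult_mat[of _ n n _ n _ n])
  also have "\<dots> = (H' * Phi) * Xi" unfolding HiP using Hc' Pc Xi by (simp add: assoc_mult_mat[of _ n n _ n _ n])
  also have "\<dots> = Phi * (X' * Xi)" unfolding X'(2) using X' Pc Xi by (simp add: assoc_mult_mat[of _ n n _ n _ n])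
  finally have GP: "G * Phi = Phi * (X' * Xi)" .
  have HiHL: "Hi * (H * L) = L" using assoc_mult_mat[OF Hi(1) Hc(1) L] Hi(3) L by simp
  have "G * V = H' * L" unfolding G_def VH using Hc' Hi Hc L HiHL
    by (simp add: assoc_mult_mat[of _ n n _ n _ n])
  hence GV: "G * V = V'" using VH' by simp
  show ?thesis
    by (rule band_unique[OF Gc _ V V' GV])
       (rule G_dvd[OF Gc _ GP], use X' Xi in auto)
qed

end



context kz begin

lemma necessity:
  assumes i: "1 \<le> i" "i < n" and dq: "\<delta> dvd q i (i-1)" and nu: "\<not> \<delta> dvd 1"
    and gu: "g \<delta> (a i (i-1)) dvd 1"
  shows "\<exists>L \<in> L_set E Phi. \<not> (\<exists>V. V \<in> V_set g K E Phi \<and> V \<in> {H * L | H. H \<in> G_Phi Phi})"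
proof -
  define p where "p = i - 1"
  have p: "p < n" "p \<noteq> i" "p \<le> i" "Suc p = i" using i unfolding p_def by auto
  define \<alpha> where "\<alpha> = a i p"
  obtain u v where uv: "u * \<delta> + v * \<alpha> = 1"
    using edd_coprime[OF edd gcd gu] unfolding \<alpha>_def p_def by blast
  define L where "L = mat n n (\<lambda>(r,c). if r = p \<and> c = p then u else if r = p \<and> c = i then - v
     else if r = i \<and> c = p then \<alpha> else if r = i \<and> c = i then \<delta> else if r = c then 1 else 0)"
  define M where "M = mat n n (\<lambda>(r,c). if r = p \<and> c = p then \<delta> else if r = p \<and> c = i then v
     else if r = i \<and> c = p then - \<alpha> else if r = i \<and> c = i then u else if r = c then 1 else 0)"
  have Lc: "L \<in> carrier_mat n n" and Mc: "M \<in> carrier_mat n n" unfolding L_def M_def by auto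
  have Le: "L $$ (p,p) = u" "L $$ (p,i) = - v" "L $$ (i,p) = \<alpha>" "L $$ (i,i) = \<delta>"
    "\<And>r c. r < n \<Longrightarrow> c < n \<Longrightarrow> c \<noteq> p \<Longrightarrow> c \<noteq> i \<Longrightarrow> L $$ (r,c) = (if r = c then 1 else 0)"
    "\<And>r c. r < n \<Longrightarrow> c < n \<Longrightarrow> r \<noteq> p \<Longrightarrow> r \<noteq> i \<Longrightarrow> L $$ (r,c) = (if r = c then 1 else 0)"
    using p i unfolding L_def by auto
  have Me: "M $$ (p,p) = \<delta>" "M $$ (p,i) = v" "M $$ (i,p) = - \<alpha>" "M $$ (i,i) = u"
    "\<And>r c. r < n \<Longrightarrow> c < n \<Longrightarrow> c \<noteq> p \<Longrightarrow> c \<noteq> i \<Longrightarrow> M $$ (r,c) = (if r = c then 1 else 0)"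
    "\<And>r c. r < n \<Longrightarrow> c < n \<Longrightarrow> r \<noteq> p \<Longrightarrow> r \<noteq> i \<Longrightarrow> M $$ (r,c) = (if r = c then 1 else 0)"
    using p i unfolding M_def by auto
  have LM: "L * M = 1\<^sub>m n"
  proof (rule eq_matI)
    fix r c assume rc: "r < dim_row (1\<^sub>m n)" "c < dim_col (1\<^sub>m n)"
    hence r: "r < n" and c: "c < n" by auto
    have e: "(L * M) $$ (r,c) = (\<Sum>k = 0..<n. L $$ (r,k) * M $$ (k,c))" by (rule mult_entry[OF Lc Mc r c])
    show "(L * M) $$ (r,c) = 1\<^sub>m n $$ (r,c)"
    proof (cases "r = p \<or> r = i")
      case True
      have "(\<Sum>k = 0..<n. L $$ (r,k) * M $$ (k,c)) = L $$ (r,p) * M $$ (p,c) + L $$ (r,i) * M $$ (i,c)"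
        by (rule sum_two) (use p i True r Le in auto)
      moreover have "L $$ (r,p) * M $$ (p,c) + L $$ (r,i) * M $$ (i,c) = (if r = c then 1 else 0)"
      proof -
        consider "r = p" | "r = i" using True by blast
        thus ?thesis
        proof cases
          case 1
          consider "c = p" | "c = i" | "c \<noteq> p \<and> c \<noteq> i" by blast
          thus ?thesis
            by cases (use 1 p(1,2) i(2) Le(1-4) Me(1-4) Le(5)[of p c] Le(5)[of i c] Me(5)[of p c] Me(5)[of i c] uv c in \<open>auto simp: algebra_simps\<close>)
        next
          case 2
          consider "c = p" | "c = i" | "c \<noteq> p \<and> c \<noteq> i" by blast
          thus ?thesis
            by cases (use 2 p(1,2) i(2) Le(1-4) Me(1-4) Le(5)[of p c] Le(5)[of i c] Me(5)[of p c] Me(5)[of i c] uv c in \<open>auto simp: algebra_simps\<close>)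
        qed
      qed
      ultimately show ?thesis unfolding e using r c by simp
    next
      case False
      have "(\<Sum>k = 0..<n. L $$ (r,k) * M $$ (k,c)) = L $$ (r,r) * M $$ (r,c)"
        by (rule sum_single) (use False r Le in auto)
      thus ?thesis unfolding e using False r c Le Me by auto
    qed
  qed (auto simp: L_def M_def)
  have MLi: "M * L = 1\<^sub>m n"
  proof (rule eq_matI)
    fix r c assume rc: "r < dim_row (1\<^sub>m n)" "c < dim_col (1\<^sub>m n)"
    hence r: "r < n" and c: "c < n" by auto
    have e: "(M * L) $$ (r,c) = (\<Sum>k = 0..<n. M $$ (r,k) * L $$ (k,c))" by (rule mult_entry[OF Mc Lc r c])
    show "(M * L) $$ (r,c) = 1\<^sub>m n $$ (r,c)"
    proof (cases "r = p \<or> r = i")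
      case True
      have "(\<Sum>k = 0..<n. M $$ (r,k) * L $$ (k,c)) = M $$ (r,p) * L $$ (p,c) + M $$ (r,i) * L $$ (i,c)"
        by (rule sum_two) (use p i True r Me in auto)
      moreover have "M $$ (r,p) * L $$ (p,c) + M $$ (r,i) * L $$ (i,c) = (if r = c then 1 else 0)"
      proof -
        consider "r = p" | "r = i" using True by blast
        thus ?thesis
        proof cases
          case 1
          consider "c = p" | "c = i" | "c \<noteq> p \<and> c \<noteq> i" by blast
          thus ?thesis
            by cases (use 1 p(1,2) i(2) Le(1-4) Me(1-4) Le(5)[of p c] Le(5)[of i c] Me(5)[of p c] Me(5)[of i c] uv c in \<open>auto simp: algebra_simps\<close>)
        next
          case 2
          consider "c = p" | "c = i" | "c \<noteq> p \<and> c \<noteq> i" by blast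
          thus ?thesis
            by cases (use 2 p(1,2) i(2) Le(1-4) Me(1-4) Le(5)[of p c] Le(5)[of i c] Me(5)[of p c] Me(5)[of i c] uv c in \<open>auto simp: algebra_simps\<close>)
        qed
      qed
      ultimately show ?thesis unfolding e using r c by simp
    next
      case False
      have "(\<Sum>k = 0..<n. M $$ (r,k) * L $$ (k,c)) = M $$ (r,r) * L $$ (r,c)"
        by (rule sum_single) (use False r Me in auto)
      thus ?thesis unfolding e using False r c Le Me by auto
    qed
  qed (auto simp: L_def M_def)
  have Linv: "invertible_mat L" unfolding invertible_mat_def inverts_mat_def
    using LM MLi Lc Mc by (intro conjI exI[of _ M]) auto
  have gi: "phi i = g (phi i) (eps p) * \<alpha>" unfolding \<alpha>_def a_def using g_dvd(1)[of "phi i"] by simp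
  obtain w where we: "eps p = g (phi i) (eps p) * w" using g_dvd(2) by (metis dvdE)
  have "\<alpha> * eps p = \<alpha> * (g (phi i) (eps p) * w)" using we by simp
  also have "\<dots> = (g (phi i) (eps p) * \<alpha>) * w" by (simp add: ac_simps)
  also have "\<dots> = phi i * w" using gi by simp
  finally have "\<alpha> * eps p = phi i * w" .
  hence ap: "phi i dvd \<alpha> * eps p" by (metis dvdI)
  have Ldv: "phi r dvd L $$ (r,c) * eps c" if rc: "r < n" "c < n" for r c
  proof -
    have pi: "phi p dvd eps i" using dvd_trans[OF phi_chain[OF p(3) i(2)] phi_eps[OF i(2)]] .
    consider "r = p \<and> c = p" | "r = p \<and> c = i" | "r = i \<and> c = p" | "r = i \<and> c = i"
      | "c \<noteq> p \<and> c \<noteq> i" | "r \<noteq> p \<and> r \<noteq> i" by blast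
    thus ?thesis
      by cases (use rc p(1,2) i(2) phi_eps[of r] phi_eps[of p] phi_eps[of i] ap pi Le(1-4) Le(5)[of r c] Le(6)[of r c] in auto)
  qed
  have LL: "L \<in> L_set E Phi" by (rule L_intro[OF Lc Linv Ldv])
  have "\<not> (\<exists>V. V \<in> V_set g K E Phi \<and> V \<in> {H * L | H. H \<in> G_Phi Phi})"
  proof
    assume "\<exists>V. V \<in> V_set g K E Phi \<and> V \<in> {H * L | H. H \<in> G_Phi Phi}"
    then obtain V H where V: "V \<in> V_set g K E Phi" and H: "H \<in> G_Phi Phi" and VH: "V = H * L" by auto
    have Hc: "H \<in> carrier_mat n n" using G_elim(1)[OF H] .
    have Vc: "V \<in> carrier_mat n n" "V $$ (i,i) = 1" using V i unfolding V_iff by auto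
    have "V * M = H * (L * M)" unfolding VH using assoc_mult_mat[OF Hc Lc Mc] .
    hence HVM: "H = V * M" using LM Hc by simp
    have "H $$ (i,p) = (\<Sum>k = 0..<n. V $$ (i,k) * M $$ (k,p))"
      unfolding HVM by (rule mult_entry[OF Vc(1) Mc i(2) p(1)])
    also have "\<dots> = V $$ (i,p) * M $$ (p,p) + V $$ (i,i) * M $$ (i,p)"
      by (rule sum_two) (use p i Me in auto)
    also have "\<dots> = V $$ (i,p) * \<delta> - \<alpha>" using Vc p i Me by simp
    finally have Hip: "H $$ (i,p) = V $$ (i,p) * \<delta> - \<alpha>" .
    have "q i p dvd H $$ (i,p)" by (rule G_dvd'[OF H p(3) i(2)])
    hence d1: "\<delta> dvd V $$ (i,p) * \<delta> - \<alpha>" using dvd_trans[OF dq[folded p_def]] Hip by simp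
    have "\<delta> dvd V $$ (i,p) * \<delta> - (V $$ (i,p) * \<delta> - \<alpha>)" by (rule dvd_diff[OF _ d1]) simp
    hence "\<delta> dvd \<alpha>" by simp
    hence "\<delta> dvd g \<delta> \<alpha>" using g_dvd(3)[of \<delta> \<delta> \<alpha>] by simp
    hence "\<delta> dvd 1" using dvd_trans gu unfolding \<alpha>_def p_def by blast
    thus False using nu by simp
  qed
  thus ?thesis using LL by blast
qed

end



lemma prod_cong_dvd:
  fixes f h :: "'b \<Rightarrow> 'a::comm_ring_1"
  assumes "finite S" "\<And>k. k \<in> S \<Longrightarrow> c dvd f k - h k"
  shows "c dvd prod f S - prod h S"
  using assms
proof (induction S rule: finite_induct)
  case empty thus ?case by simp
next
  case (insert x F)
  have e: "prod f (insert x F) - prod h (insert x F) = (f x - h x) * prod f F + h x * (prod f F - prod h F)"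
    using insert.hyps by (simp add: algebra_simps)
  show ?case unfolding e using insert by (intro dvd_add dvd_mult2 dvd_mult) auto
qed

lemma det_cong_dvd:
  fixes A B :: "'a::comm_ring_1 mat"
  assumes A: "A \<in> carrier_mat n n" and B: "B \<in> carrier_mat n n"
    and d: "\<And>i j. i < n \<Longrightarrow> j < n \<Longrightarrow> c dvd A $$ (i,j) - B $$ (i,j)"
  shows "c dvd det A - det B"
proof -
  have "det A - det B = (\<Sum>p \<in> {p. p permutes {0..<n}}. signof p * ((\<Prod>i = 0..<n. A $$ (i, p i)) - (\<Prod>i = 0..<n. B $$ (i, p i))))"
    unfolding det_def'[OF A] det_def'[OF B] by (simp add: sum_subtractf right_diff_distrib)
  also have "c dvd \<dots>"
  proof (rule dvd_sum)
    fix p assume "p \<in> {p. p permutes {0..<n}}"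
    hence p: "p permutes {0..<n}" by simp
    have "c dvd (\<Prod>i = 0..<n. A $$ (i, p i)) - (\<Prod>i = 0..<n. B $$ (i, p i))"
    proof (rule prod_cong_dvd)
      fix i assume "i \<in> {0..<n}"
      hence "i < n" "p i < n" using permutes_in_image[OF p, of i] by auto
      thus "c dvd A $$ (i, p i) - B $$ (i, p i)" using d by blast
    qed simp
    thus "c dvd signof p * ((\<Prod>i = 0..<n. A $$ (i, p i)) - (\<Prod>i = 0..<n. B $$ (i, p i)))" by simp
  qed
  finally show ?thesis .
qed

context kz begin

definition Dm where "Dm L t = mat (n - t) (n - t) (\<lambda>(r,c). L $$ (r + t, c + t))"
definition Dt where "Dt L t = det (Dm L t)"

lemma Dm_carrier: "Dm L t \<in> carrier_mat (n - t) (n - t)" unfolding Dm_def by simp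

lemma L_a_dvd:
  assumes L: "L \<in> L_set E Phi" and i: "1 \<le> i" "i \<le> l" "l < n" "j < i"
  shows "a i (i-1) dvd L $$ (l,j)"
proof -
  have "phi i dvd phi l" using phi_chain i by simp
  also have "phi l dvd L $$ (l,j) * eps j" using L_elim(3)[OF L, of l j] i by simp
  also have "\<dots> dvd L $$ (l,j) * eps (i-1)" using eps_chain[of j "i-1"] i by (simp add: mult_dvd_mono)
  finally have "phi i dvd L $$ (l,j) * eps (i-1)" .
  from edd_euclid[OF edd gcd phi_nz this] i show ?thesis unfolding a_def by simp
qed

lemma Dt_coprime:
  assumes L: "L \<in> L_set E Phi" and i: "1 \<le> i" "i < n"
  shows "g (Dt L i) (a i (i-1)) dvd 1"
proof -
  have Lc: "L \<in> carrier_mat n n" and Li: "invertible_mat L" using L_elim[OF L] by auto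
  define A where "A = mat i i (\<lambda>(r,c). L $$ (r,c))"
  define B where "B = mat i (n - i) (\<lambda>(r,c). L $$ (r,c + i))"
  define L' where "L' = four_block_mat A B (0\<^sub>m (n - i) i) (Dm L i)"
  have Ac: "A \<in> carrier_mat i i" and Bc: "B \<in> carrier_mat i (n - i)" unfolding A_def B_def by auto
  have nn: "i + (n - i) = n" using i by simp
  have L'c: "L' \<in> carrier_mat n n" unfolding L'_def using four_block_carrier_mat[OF Ac Dm_carrier[of L i]] nn
    by simp
  have detL': "det L' = det A * Dt L i" unfolding L'_def Dt_def
    by (rule det_four_block_mat_lower_left_zero[OF Ac Bc refl Dm_carrier])
  have ent: "L' $$ (r,c) = (if i \<le> r \<and> c < i then 0 else L $$ (r,c))" if rc: "r < n" "c < n" for r c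
    unfolding L'_def using rc Ac Bc Dm_carrier[of L i] nn
    by (auto simp: A_def B_def Dm_def)
  have "a i (i-1) dvd det L - det L'"
  proof (rule det_cong_dvd[OF Lc L'c])
    fix r c assume rc: "r < n" "c < n"
    show "a i (i-1) dvd L $$ (r,c) - L' $$ (r,c)"
      using ent[OF rc] L_a_dvd[OF L i(1) _ rc(1), of c] by auto
  qed
  then obtain z where z: "det L = det A * Dt L i + a i (i-1) * z" unfolding detL'
    by (metis dvdE diff_eq_eq add.commute)
  have "g (Dt L i) (a i (i-1)) dvd det A * Dt L i" by (rule dvd_mult[OF g_dvd(1)])
  moreover have "g (Dt L i) (a i (i-1)) dvd a i (i-1) * z" by (rule dvd_mult2[OF g_dvd(2)])
  ultimately have "g (Dt L i) (a i (i-1)) dvd det L" unfolding z by (rule dvd_add)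
  also have "det L dvd 1" using invertible_det_unit[OF Lc Li] .
  finally show ?thesis .
qed

definition cond where "cond \<longleftrightarrow> (\<forall>i. 1 \<le> i \<and> i < n \<and> \<not> (phi i dvd phi (i-1) \<and> phi (i-1) dvd phi i) \<longrightarrow>
        (\<forall>\<delta>. \<delta> dvd q i (i-1) \<and> \<not> \<delta> dvd 1 \<longrightarrow> \<not> g \<delta> (a i (i-1)) dvd 1))"

lemma Dt_bezout:
  assumes L: "L \<in> L_set E Phi" and c: cond and i: "1 \<le> i" "i < n"
  shows "\<exists>u v. u * Dt L i + v * q i (i-1) = 1"
proof -
  define \<delta> where "\<delta> = g (Dt L i) (q i (i-1))"
  have d1: "\<delta> dvd Dt L i" "\<delta> dvd q i (i-1)" unfolding \<delta>_def using g_dvd by auto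
  have "\<delta> dvd 1"
  proof (cases "phi i dvd phi (i-1) \<and> phi (i-1) dvd phi i")
    case True
    then obtain w where w: "phi (i-1) = phi i * w" by (auto elim!: dvdE)
    have qm: "phi (i-1) * q i (i-1) = phi i" using q_mult[of "i-1" i] i by simp
    have "phi i * 1 = phi i * (w * q i (i-1))" using qm w by (simp add: ac_simps)
    hence "w * q i (i-1) = 1" using phi_nz[of i] i by (metis mult_left_cancel)
    hence "q i (i-1) dvd 1" by (metis dvdI mult.commute)
    thus ?thesis using d1(2) dvd_trans by blast
  next
    case False
    show ?thesis
    proof (rule ccontr)
      assume nu: "\<not> \<delta> dvd 1"
      have "\<not> g \<delta> (a i (i-1)) dvd 1" using c False i d1(2) nu unfolding cond_def by blast
      moreover have "g \<delta> (a i (i-1)) dvd g (Dt L i) (a i (i-1))"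
        using g_dvd(1)[of \<delta> "a i (i-1)"] g_dvd(2)[of \<delta> "a i (i-1)"] d1(1)
        by (intro g_dvd(3)) (auto intro: dvd_trans)
      ultimately show False using Dt_coprime[OF L i] dvd_trans by blast
    qed
  qed
  from edd_coprime[OF edd gcd this[unfolded \<delta>_def]] show ?thesis .
qed

lemma Dm0: "L \<in> carrier_mat n n \<Longrightarrow> Dm L 0 = L"
  unfolding Dm_def by (rule eq_matI) auto

lemma Jsum:
  assumes L: "L \<in> L_set E Phi" and c: cond and i: "i < n"
  shows "\<exists>r. (\<Sum>t = 0..i. r t * q i t * Dt L t) = 1"
  using i
proof (induction i)
  case 0
  have Lc: "L \<in> carrier_mat n n" and Li: "invertible_mat L" using L_elim[OF L] by auto
  obtain w where w: "1 = det L * w" using invertible_det_unit[OF Lc Li] by (auto elim!: dvdE)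
  show ?case using Dm0[OF Lc] q_refl[of 0] 0 w by (intro exI[of _ "\<lambda>_. w"]) (simp add: Dt_def ac_simps)
next
  case (Suc i)
  obtain r where r: "(\<Sum>t = 0..i. r t * q i t * Dt L t) = 1" using Suc by auto
  obtain u v where uv: "u * Dt L (Suc i) + v * q (Suc i) i = 1" using Dt_bezout[OF L c, of "Suc i"] Suc.prems by auto
  define r' where "r' t = (if t = Suc i then u else v * r t)" for t
  have "(\<Sum>t = 0..Suc i. r' t * q (Suc i) t * Dt L t) = (\<Sum>t = 0..i. r' t * q (Suc i) t * Dt L t) + u * Dt L (Suc i)"
    using q_refl[of "Suc i"] Suc.prems by (simp add: sum.atLeast0_atMost_Suc r'_def)
  also have "(\<Sum>t = 0..i. r' t * q (Suc i) t * Dt L t) = v * q (Suc i) i * (\<Sum>t = 0..i. r t * q i t * Dt L t)"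
    unfolding sum_distrib_left
  proof (rule sum.cong[OF refl])
    fix t assume "t \<in> {0..i}"
    hence t: "t \<le> i" by simp
    have "q (Suc i) i * q i t = q (Suc i) t" using q_trans[of t i "Suc i"] t Suc.prems by simp
    thus "r' t * q (Suc i) t * Dt L t = v * q (Suc i) i * (r t * q i t * Dt L t)"
      using t unfolding r'_def by (simp add: ac_simps)
  qed
  finally show ?case unfolding r using uv by (intro exI[of _ r']) (simp add: ac_simps)
qed

definition xv where "xv L i t l = (if t \<le> l \<and> l < n then adj_mat (Dm L t) $$ (i - t, l - t) else 0)"

lemma xv_row:
  assumes L: "L \<in> carrier_mat n n" and ti: "t \<le> i" "i < n" and m: "t \<le> m" "m < n"
  shows "(\<Sum>l = 0..<n. xv L i t l * L $$ (l,m)) = (if m = i then Dt L t else 0)"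
proof -
  let ?D = "Dm L t" and ?A = "adj_mat (Dm L t)"
  have Dc: "?D \<in> carrier_mat (n-t) (n-t)" by (rule Dm_carrier)
  have Ac: "?A \<in> carrier_mat (n-t) (n-t)" using adj_mat(1)[OF Dc] .
  have "(\<Sum>l = 0..<n. xv L i t l * L $$ (l,m)) = (\<Sum>l = t..<n. xv L i t l * L $$ (l,m))"
    by (rule sum.mono_neutral_right) (use ti in \<open>auto simp: xv_def\<close>)
  also have "\<dots> = (\<Sum>l = 0 + t..<(n - t) + t. xv L i t l * L $$ (l,m))" using ti by simp
  also have "\<dots> = (\<Sum>k = 0..<n - t. xv L i t (k + t) * L $$ (k + t, m))"
    by (rule sum.shift_bounds_nat_ivl)
  also have "\<dots> = (\<Sum>k = 0..<n - t. ?A $$ (i - t, k) * ?D $$ (k, m - t))"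
    by (rule sum.cong[OF refl]) (use ti m in \<open>auto simp: xv_def Dm_def\<close>)
  also have "\<dots> = (?A * ?D) $$ (i - t, m - t)"
    by (rule mult_entry[OF Ac Dc, symmetric]) (use ti m in auto)
  also have "\<dots> = (if m = i then Dt L t else 0)"
    unfolding adj_mat(3)[OF Dc] using ti m by (auto simp: Dt_def)
  finally show ?thesis .
qed

lemma row_exists:
  assumes L: "L \<in> L_set E Phi" and c: cond and i: "i < n"
  shows "\<exists>x. (\<forall>l<i. q i l dvd x l) \<and> (\<forall>m. i \<le> m \<and> m < n \<longrightarrow> (\<Sum>l = 0..<n. x l * L $$ (l,m)) = (if m = i then 1 else 0))"
proof -
  have Lc: "L \<in> carrier_mat n n" using L_elim[OF L] by auto
  obtain r where r: "(\<Sum>t = 0..i. r t * q i t * Dt L t) = 1" using Jsum[OF L c i] by auto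
  define x where "x l = (\<Sum>t = 0..i. r t * q i t * xv L i t l)" for l
  have dv: "q i l dvd x l" if l: "l < i" for l
    unfolding x_def
  proof (rule dvd_sum)
    fix t assume "t \<in> {0..i}"
    hence t: "t \<le> i" by simp
    show "q i l dvd r t * q i t * xv L i t l"
    proof (cases "t \<le> l")
      case True
      hence "q i l dvd q i t" using q_dvd[of t l i] l i by simp
      thus ?thesis by (simp add: dvd_mult2 dvd_mult)
    next
      case False thus ?thesis by (simp add: xv_def)
    qed
  qed
  have row: "(\<Sum>l = 0..<n. x l * L $$ (l,m)) = (if m = i then 1 else 0)" if m: "i \<le> m" "m < n" for m
  proof -
    have "(\<Sum>l = 0..<n. x l * L $$ (l,m)) = (\<Sum>l = 0..<n. \<Sum>t = 0..i. r t * q i t * (xv L i t l * L $$ (l,m)))"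
      unfolding x_def sum_distrib_right by (simp add: mult.assoc)
    also have "\<dots> = (\<Sum>t = 0..i. r t * q i t * (\<Sum>l = 0..<n. xv L i t l * L $$ (l,m)))"
      by (subst sum.swap) (simp add: sum_distrib_left)
    also have "\<dots> = (\<Sum>t = 0..i. r t * q i t * (if m = i then Dt L t else 0))"
      by (rule sum.cong[OF refl]) (use xv_row[OF Lc _ i] m in auto)
    also have "\<dots> = (if m = i then 1 else 0)" using r by auto
    finally show ?thesis .
  qed
  show ?thesis using dv row by blast
qed

end



context kz begin

definition Yv where "Yv L i y \<longleftrightarrow> (\<exists>x. (\<forall>l<i. q i l dvd x l) \<and> (\<forall>m<n. y m = (\<Sum>l = 0..<n. x l * L $$ (l,m))))"

lemma Y_dvd:
  assumes L: "L \<in> L_set E Phi" and Y: "Yv L i y" and i: "i < n" "j < i"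
  shows "a i j dvd y j"
proof -
  obtain x where x: "\<forall>l<i. q i l dvd x l" "\<forall>m<n. y m = (\<Sum>l = 0..<n. x l * L $$ (l,m))"
    using Y unfolding Yv_def by blast
  have yj: "y j = (\<Sum>l = 0..<n. x l * L $$ (l,j))" using x(2) i by simp
  have "y j * eps j = (\<Sum>l = 0..<n. x l * (L $$ (l,j) * eps j))"
    unfolding yj sum_distrib_right by (simp add: mult.assoc)
  also have "phi i dvd \<dots>"
  proof (rule dvd_sum)
    fix l assume "l \<in> {0..<n}"
    hence l: "l < n" by simp
    obtain s where s: "L $$ (l,j) * eps j = phi l * s" using L_elim(3)[OF L l, of j] i by (auto elim!: dvdE)
    show "phi i dvd x l * (L $$ (l,j) * eps j)"
    proof (cases "l < i")
      case True
      then obtain z where z: "x l = q i l * z" using x(1) by (auto elim!: dvdE)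
      have "x l * (L $$ (l,j) * eps j) = (phi l * q i l) * (z * s)" unfolding z s by (simp add: ac_simps)
      also have "\<dots> = phi i * (z * s)" using q_mult[of l i] True i by simp
      finally show ?thesis by simp
    next
      case False
      hence "phi i dvd phi l" using phi_chain l by simp
      thus ?thesis unfolding s by (simp add: dvd_mult)
    qed
  qed
  finally have "phi i dvd y j * eps j" .
  from edd_euclid[OF edd gcd phi_nz[OF i(1)] this] show ?thesis unfolding a_def .
qed

lemma Y_comb:
  assumes Y: "Yv L i y" and Z: "Yv L l z" and li: "l \<le> i" "i < n"
  shows "Yv L i (\<lambda>m. y m - c * q i l * z m)"
proof -
  obtain x where x: "\<forall>k<i. q i k dvd x k" "\<forall>m<n. y m = (\<Sum>k = 0..<n. x k * L $$ (k,m))"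
    using Y unfolding Yv_def by blast
  obtain x' where x': "\<forall>k<l. q l k dvd x' k" "\<forall>m<n. z m = (\<Sum>k = 0..<n. x' k * L $$ (k,m))"
    using Z unfolding Yv_def by blast
  define x'' where "x'' k = x k - c * q i l * x' k" for k
  have d: "q i k dvd x'' k" if k: "k < i" for k
  proof -
    have "q i k dvd q i l * x' k"
    proof (cases "k < l")
      case True
      then obtain w where w: "x' k = q l k * w" using x'(1) by (auto elim!: dvdE)
      have "q i l * x' k = (q i l * q l k) * w" unfolding w by (simp add: ac_simps)
      also have "\<dots> = q i k * w" using q_trans[of k l i] True li by simp
      finally show ?thesis by simp
    next
      case False
      hence "q i k dvd q i l" using q_dvd[of l k i] k li by simp
      thus ?thesis by (simp add: dvd_mult2)
    qed
    hence "q i k dvd c * (q i l * x' k)" by (simp add: dvd_mult)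
    thus ?thesis unfolding x''_def using x(1) k by (simp add: dvd_diff ac_simps)
  qed
  have r: "y m - c * q i l * z m = (\<Sum>k = 0..<n. x'' k * L $$ (k,m))" if m: "m < n" for m
  proof -
    have "(\<Sum>k = 0..<n. x'' k * L $$ (k,m)) = (\<Sum>k = 0..<n. x k * L $$ (k,m)) - (\<Sum>k = 0..<n. c * q i l * x' k * L $$ (k,m))"
      unfolding x''_def by (simp add: sum_subtractf left_diff_distrib)
    also have "(\<Sum>k = 0..<n. c * q i l * x' k * L $$ (k,m)) = c * q i l * (\<Sum>k = 0..<n. x' k * L $$ (k,m))"
      by (simp add: sum_distrib_left mult.assoc)
    finally show ?thesis unfolding x(2)[rule_format, OF m] x'(2)[rule_format, OF m] by simp
  qed
  show ?thesis unfolding Yv_def using d r by blast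
qed

definition goodrow where "goodrow L i y \<longleftrightarrow> Yv L i y \<and> y i = 1 \<and> (\<forall>m. i < m \<and> m < n \<longrightarrow> y m = 0)
   \<and> (\<forall>j<i. \<exists>k \<in> K (b i j). y j = a i j * k)"

lemma rows_exist:
  assumes L: "L \<in> L_set E Phi" and c: cond
  shows "i < n \<Longrightarrow> \<exists>y. goodrow L i y"
proof (induction i rule: less_induct)
  case (less i)
  have "\<forall>l. \<exists>y. l < i \<longrightarrow> goodrow L l y" using less by auto
  then obtain W where W: "\<And>l. l < i \<Longrightarrow> goodrow L l (W l)" by metis
  obtain x where x: "\<forall>l<i. q i l dvd x l"
     "\<forall>m. i \<le> m \<and> m < n \<longrightarrow> (\<Sum>l = 0..<n. x l * L $$ (l,m)) = (if m = i then 1 else 0)"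
    using row_exists[OF L c less.prems] by blast
  define y0 where "y0 m = (\<Sum>l = 0..<n. x l * L $$ (l,m))" for m
  have Y0: "Yv L i y0" unfolding Yv_def y0_def using x(1) by blast
  have N: "\<exists>y. Yv L i y \<and> y i = 1 \<and> (\<forall>m. i < m \<and> m < n \<longrightarrow> y m = 0)
     \<and> (\<forall>j. i - d \<le> j \<and> j < i \<longrightarrow> (\<exists>k \<in> K (b i j). y j = a i j * k))" if "d \<le> i" for d
    using that
  proof (induction d)
    case 0
    have y0i: "y0 i = 1" using x(2) less.prems unfolding y0_def by simp
    have y0z: "\<forall>m. i < m \<and> m < n \<longrightarrow> y0 m = 0" using x(2) unfolding y0_def by simp
    show ?case using Y0 y0i y0z by auto
  next
    case (Suc d)
    define j0 where "j0 = i - Suc d"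
    have j0: "j0 < i" "i - d = Suc j0" using Suc.prems unfolding j0_def by auto
    obtain y where y: "Yv L i y" "y i = 1" "\<forall>m. i < m \<and> m < n \<longrightarrow> y m = 0"
      "\<forall>j. i - d \<le> j \<and> j < i \<longrightarrow> (\<exists>k \<in> K (b i j). y j = a i j * k)"
      using Suc.IH Suc.prems by auto
    have Wj: "goodrow L j0 (W j0)" using W j0 by auto
    hence Wj': "Yv L j0 (W j0)" "W j0 j0 = 1" "\<forall>m. j0 < m \<and> m < n \<longrightarrow> W j0 m = 0"
      unfolding goodrow_def by auto
    obtain \<kappa> where \<kappa>: "y j0 = a i j0 * \<kappa>" using Y_dvd[OF L y(1) less.prems j0(1)] by (auto elim!: dvdE)
    obtain k where k: "k \<in> K (b i j0)" "b i j0 dvd (\<kappa> - k)"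
      using res unfolding is_residue_system_def by blast
    obtain t where t: "\<kappa> - k = b i j0 * t" using k(2) by (auto elim!: dvdE)
    define y' where "y' m = y m - t * q i j0 * W j0 m" for m
    have Y': "Yv L i y'" unfolding y'_def by (rule Y_comb[OF y(1) Wj'(1)]) (use j0 less.prems in auto)
    have y'i: "y' i = 1" unfolding y'_def using y(2) Wj'(3) j0 less.prems by simp
    have y'z: "\<forall>m. i < m \<and> m < n \<longrightarrow> y' m = 0" unfolding y'_def using y(3) Wj'(3) j0 by auto
    have y'j0: "y' j0 = a i j0 * k"
    proof -
      have "y' j0 = a i j0 * \<kappa> - t * (a i j0 * b i j0)" unfolding y'_def \<kappa> Wj'(2)
        using ab[of j0 i] j0 less.prems by simp
      also have "\<dots> = a i j0 * (\<kappa> - b i j0 * t)" by (simp add: algebra_simps)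
      also have "\<dots> = a i j0 * k" using t by (simp add: algebra_simps)
      finally show ?thesis .
    qed
    have y'n: "\<forall>j. i - Suc d \<le> j \<and> j < i \<longrightarrow> (\<exists>k \<in> K (b i j). y' j = a i j * k)"
    proof (intro allI impI)
      fix j assume jj: "i - Suc d \<le> j \<and> j < i"
      show "\<exists>k \<in> K (b i j). y' j = a i j * k"
      proof (cases "j = j0")
        case True thus ?thesis using y'j0 k by auto
      next
        case False
        hence "j0 < j" using jj unfolding j0_def by auto
        hence "y' j = y j" unfolding y'_def using Wj'(3) jj less.prems by simp
        thus ?thesis using y(4) jj j0 \<open>j0 < j\<close> by auto
      qed
    qed
    show ?case using Y' y'i y'z y'n by blast
  qed
  obtain y where "Yv L i y" "y i = 1" "\<forall>m. i < m \<and> m < n \<longrightarrow> y m = 0"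
      "\<forall>j. i - i \<le> j \<and> j < i \<longrightarrow> (\<exists>k \<in> K (b i j). y j = a i j * k)" using N[of i] by blast
  thus ?case unfolding goodrow_def by auto
qed

lemma exists_V:
  assumes L: "L \<in> L_set E Phi" and c: cond
  shows "\<exists>V. V \<in> V_set g K E Phi \<and> V \<in> {H * L | H. H \<in> G_Phi Phi}"
proof -
  have Lc: "L \<in> carrier_mat n n" and Li: "invertible_mat L" using L_elim[OF L] by auto
  have "\<forall>i. \<exists>y. i < n \<longrightarrow> goodrow L i y" using rows_exist[OF L c] by auto
  then obtain W where W: "\<And>i. i < n \<Longrightarrow> goodrow L i (W i)" by metis
  have "\<forall>i. \<exists>x. i < n \<longrightarrow> ((\<forall>l<i. q i l dvd x l) \<and> (\<forall>m<n. W i m = (\<Sum>l = 0..<n. x l * L $$ (l,m))))"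
    using W unfolding goodrow_def Yv_def by blast
  then obtain X where X: "\<And>i. i < n \<Longrightarrow> (\<forall>l<i. q i l dvd X i l) \<and> (\<forall>m<n. W i m = (\<Sum>l = 0..<n. X i l * L $$ (l,m)))"
    by metis
  define V where "V = mat n n (\<lambda>(i,j). W i j)"
  define H where "H = mat n n (\<lambda>(i,l). X i l)"
  have Vc: "V \<in> carrier_mat n n" and Hc: "H \<in> carrier_mat n n" unfolding V_def H_def by auto
  have HL: "H * L = V"
  proof (rule eq_matI)
    fix i j assume ij: "i < dim_row V" "j < dim_col V"
    hence ij': "i < n" "j < n" using Vc by auto
    show "(H * L) $$ (i,j) = V $$ (i,j)"
      unfolding mult_entry[OF Hc Lc ij'] using X[OF ij'(1)] ij' by (simp add: H_def V_def)
  qed (use Hc Vc Lc in auto)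
  have VV: "V \<in> V_set g K E Phi" unfolding V_iff
    using Vc W unfolding goodrow_def V_def by auto
  have "det V = prod_list (diag_mat V)"
    by (rule det_lower_triangular[OF _ Vc]) (use W in \<open>auto simp: V_def goodrow_def\<close>)
  also have "diag_mat V = replicate n 1"
    by (rule nth_equalityI) (use W Vc in \<open>auto simp: diag_mat_def V_def goodrow_def\<close>)
  also have "prod_list (replicate n 1) = (1::'a)" by simp
  finally have dV: "det V = 1" .
  have "det H * det L = 1" using det_mult[OF Hc Lc] HL dV by simp
  hence "det H dvd 1" by (metis dvdI)
  hence "H \<in> G_Phi Phi" by (rule G_intro[OF Hc]) (use X in \<open>auto simp: H_def\<close>)
  thus ?thesis using VV HL by blast
qed

end

theorem theorem5p7:
  fixes E Phi :: "'a::idom_divide mat" and n :: nat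
    and g :: "'a \<Rightarrow> 'a \<Rightarrow> 'a" and K :: "'a \<Rightarrow> 'a set"
  assumes edd: "elementary_divisor_domain TYPE('a)"
    and gcd: "is_gcd_fun g"
    and res: "is_residue_system K"
    and E: "E \<in> carrier_mat n n" "d_matrix E" "det E \<noteq> 0"
    and Phi: "Phi \<in> carrier_mat n n" "d_matrix Phi" "det Phi \<noteq> 0"
    and dv: "\<forall>i < n. Phi $$ (i,i) dvd E $$ (i,i)"
  shows "(\<forall>L \<in> L_set E Phi. \<exists>!V. V \<in> V_set g K E Phi \<and> V \<in> {H * L | H. H \<in> G_Phi Phi})
     \<longleftrightarrow>
     (\<forall>i. 1 \<le> i \<and> i < n \<and> \<not> (Phi $$ (i,i) dvd Phi $$ (i-1,i-1) \<and> Phi $$ (i-1,i-1) dvd Phi $$ (i,i)) \<longrightarrow>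
        (\<forall>\<delta>. \<delta> dvd (Phi $$ (i,i) div Phi $$ (i-1,i-1)) \<and> \<not> \<delta> dvd 1 \<longrightarrow>
           \<not> g \<delta> (Phi $$ (i,i) div g (Phi $$ (i,i)) (E $$ (i-1,i-1))) dvd 1))"
proof -
  interpret kz E Phi n g K
    using edd gcd res E Phi dv by unfold_locales auto
  have ci: "cond \<longleftrightarrow> (\<forall>i. 1 \<le> i \<and> i < n \<and> \<not> (Phi $$ (i,i) dvd Phi $$ (i-1,i-1) \<and> Phi $$ (i-1,i-1) dvd Phi $$ (i,i)) \<longrightarrow>
        (\<forall>\<delta>. \<delta> dvd (Phi $$ (i,i) div Phi $$ (i-1,i-1)) \<and> \<not> \<delta> dvd 1 \<longrightarrow>
           \<not> g \<delta> (Phi $$ (i,i) div g (Phi $$ (i,i)) (E $$ (i-1,i-1))) dvd 1))"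
    unfolding cond_def q_def a_def by simp
  have "(\<forall>L \<in> L_set E Phi. \<exists>!V. V \<in> V_set g K E Phi \<and> V \<in> {H * L | H. H \<in> G_Phi Phi}) \<longleftrightarrow> cond"
  proof
    assume lhs: "\<forall>L \<in> L_set E Phi. \<exists>!V. V \<in> V_set g K E Phi \<and> V \<in> {H * L | H. H \<in> G_Phi Phi}"
    show cond unfolding cond_def
    proof (intro allI impI)
      fix i \<delta>
      assume i: "1 \<le> i \<and> i < n \<and> \<not> (phi i dvd phi (i-1) \<and> phi (i-1) dvd phi i)"
        and d: "\<delta> dvd q i (i-1) \<and> \<not> \<delta> dvd 1"
      show "\<not> g \<delta> (a i (i-1)) dvd 1"
      proof
        assume gu: "g \<delta> (a i (i-1)) dvd 1"
        obtain L where L: "L \<in> L_set E Phi"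
          and nV: "\<not> (\<exists>V. V \<in> V_set g K E Phi \<and> V \<in> {H * L | H. H \<in> G_Phi Phi})"
          using necessity[of i \<delta>] i d gu by blast
        show False using lhs L nV by blast
      qed
    qed
  next
    assume c: cond
    show "\<forall>L \<in> L_set E Phi. \<exists>!V. V \<in> V_set g K E Phi \<and> V \<in> {H * L | H. H \<in> G_Phi Phi}"
    proof
      fix L assume L: "L \<in> L_set E Phi"
      have Lc: "L \<in> carrier_mat n n" using L_elim(1)[OF L] .
      obtain V where V: "V \<in> V_set g K E Phi" "V \<in> {H * L | H. H \<in> G_Phi Phi}"
        using exists_V[OF L c] by blast
      show "\<exists>!V. V \<in> V_set g K E Phi \<and> V \<in> {H * L | H. H \<in> G_Phi Phi}"
      proof (rule ex1I[of _ V])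
        show "V \<in> V_set g K E Phi \<and> V \<in> {H * L | H. H \<in> G_Phi Phi}" using V by blast
      next
        fix V' assume V': "V' \<in> V_set g K E Phi \<and> V' \<in> {H * L | H. H \<in> G_Phi Phi}"
        obtain H where H: "H \<in> G_Phi Phi" "V = H * L" using V(2) by blast
        obtain H' where H': "H' \<in> G_Phi Phi" "V' = H' * L" using V' by blast
        show "V' = V" by (rule class_unique[OF Lc H'(1) H(1) _ V(1) H'(2) H(2)]) (use V' in blast)
      qed
    qed
  qed
  thus ?thesis using ci by simp
qed

end
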